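(* For a nonzero nondegenerate m-triangle $\mathbf X$ with moment of inertia $I$, the following are equivalent: (a) its shape is a pole of the shape sphere, i.e. $m_j|\mathbf a_j|^2=\frac12(1-m_j)I$ for $j=1,2,3$; (b) $\lambda_1=\lambda_2$; (c) its area equals $\Delta_{\max}=\frac{I}{4\sqrt{m_1m_2m_3}}$, which is the maximal area among all m-triangles with the same moment of inertia $I$. In particular, the poles are the shapes uniquely characterized by (b) or (c).
   Context: Masses $m_1,m_2,m_3>0$, $m_1+m_2+m_3=1$; m-triangle $\mathbf X=(\mathbf a_1,\mathbf a_2,\mathbf a_3)$, $\mathbf a_i\in\mathbb R^3$, $\sum m_i\mathbf a_i=0$; $I=\sum m_i|\mathbf a_i|^2$; $\Delta$ is its area; $\lambda_1\le\lambda_2$ are the two smallest eigenvalues of the inertia tensor $B_{\mathbf X}(\mathbf u,\mathbf v)=\sum m_j(\mathbf u\times\mathbf a_j)\cdot(\mathbf v\times\mathbf a_j)$. The poles of the shape sphere (oriented m-triangles of size $I=1$ modulo rotation) are the shapes of the positively or negatively oriented m-triangles with $m_j|\mathbf a_j|^2=(1-m_j)/2$. *)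

theory Defs
  imports "HOL-Analysis.Analysis" "HOL-Computational_Algebra.Polynomial"
begin

definition mass_ok :: "real \<Rightarrow> real \<Rightarrow> real \<Rightarrow> bool" where
  "mass_ok m1 m2 m3 \<longleftrightarrow> m1 > 0 \<and> m2 > 0 \<and> m3 > 0 \<and> m1 + m2 + m3 = 1"

definition m_triangle :: "real \<Rightarrow> real \<Rightarrow> real \<Rightarrow> real^3 \<Rightarrow> real^3 \<Rightarrow> real^3 \<Rightarrow> bool" where
  "m_triangle m1 m2 m3 a1 a2 a3 \<longleftrightarrow> m1 *\<^sub>R a1 + m2 *\<^sub>R a2 + m3 *\<^sub>R a3 = 0"

definition inertia :: "real \<Rightarrow> real \<Rightarrow> real \<Rightarrow> real^3 \<Rightarrow> real^3 \<Rightarrow> real^3 \<Rightarrow> real" where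
  "inertia m1 m2 m3 a1 a2 a3 = m1 * (norm a1)\<^sup>2 + m2 * (norm a2)\<^sup>2 + m3 * (norm a3)\<^sup>2"

definition tri_area :: "real^3 \<Rightarrow> real^3 \<Rightarrow> real^3 \<Rightarrow> real" where
  "tri_area a1 a2 a3 = norm (cross3 (a2 - a1) (a3 - a1)) / 2"

definition inertia_form :: "real \<Rightarrow> real \<Rightarrow> real \<Rightarrow> real^3 \<Rightarrow> real^3 \<Rightarrow> real^3 \<Rightarrow> real^3 \<Rightarrow> real^3 \<Rightarrow> real" where
  "inertia_form m1 m2 m3 a1 a2 a3 u v =
     m1 * (cross3 u a1 \<bullet> cross3 v a1) + m2 * (cross3 u a2 \<bullet> cross3 v a2)
     + m3 * (cross3 u a3 \<bullet> cross3 v a3)"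

definition inertia_matrix :: "real \<Rightarrow> real \<Rightarrow> real \<Rightarrow> real^3 \<Rightarrow> real^3 \<Rightarrow> real^3 \<Rightarrow> real^3^3" where
  "inertia_matrix m1 m2 m3 a1 a2 a3 =
     (\<chi> i j. inertia_form m1 m2 m3 a1 a2 a3 (axis i 1) (axis j 1))"

definition char_poly3 :: "real^3^3 \<Rightarrow> real poly" where
  "char_poly3 A = det (\<chi> i j. (if i = j then [:0, 1:] else 0) - [:A $ i $ j:])"

definition sorted_eigenvalues :: "real^3^3 \<Rightarrow> real list" where
  "sorted_eigenvalues A = sorted_list_of_multiset (proots (char_poly3 A))"

definition lambda1 :: "real \<Rightarrow> real \<Rightarrow> real \<Rightarrow> real^3 \<Rightarrow> real^3 \<Rightarrow> real^3 \<Rightarrow> real" where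
  "lambda1 m1 m2 m3 a1 a2 a3 = sorted_eigenvalues (inertia_matrix m1 m2 m3 a1 a2 a3) ! 0"

definition lambda2 :: "real \<Rightarrow> real \<Rightarrow> real \<Rightarrow> real^3 \<Rightarrow> real^3 \<Rightarrow> real^3 \<Rightarrow> real" where
  "lambda2 m1 m2 m3 a1 a2 a3 = sorted_eigenvalues (inertia_matrix m1 m2 m3 a1 a2 a3) ! 1"

end

theory Submission
  imports Defs
begin


lemma cross_dot_cross:
  fixes u v a :: "real^3"
  shows "cross3 u a \<bullet> cross3 v a = (u \<bullet> v) * (a \<bullet> a) - (u \<bullet> a) * (v \<bullet> a)"
  by (simp add: cross3_def inner_vec_def sum_3 algebra_simps power2_eq_square)

lemma det_lemma:
  fixes z y :: "real^3" and u al be :: real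
  shows "det (\<chi> i j. (if i = j then u else 0) + al * (z$i) * (z$j) + be * (y$i) * (y$j))
     = u^3 + u^2 * (al * (z \<bullet> z) + be * (y \<bullet> y)) + u * al * be * (cross3 z y \<bullet> cross3 z y)"
  unfolding det_3 by (simp add: cross3_def inner_vec_def sum_3; algebra)

lemma poly_char:
  fixes A :: "real^3^3"
  shows "poly (char_poly3 A) t = det (\<chi> i j. (if i = j then t else 0) - A$i$j)"
  unfolding char_poly3_def det_3 by (simp; algebra)



lemma ax: "(axis i (1::real)) $ j = (if j = i then 1 else 0)" by (simp add: axis_def)

context
  fixes m1 m2 m3 :: real and a1 a2 a3 z y :: "real^3"
  assumes msum: "m1 + m2 + m3 = 1" and pos1: "m1 > 0" and pos2: "m2 > 0" and pos3: "m3 > 0"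
    and ha1: "a1 = -(m3 *\<^sub>R y) - m2 *\<^sub>R z"
    and ha2: "a2 = -(m3 *\<^sub>R y) + m1 *\<^sub>R z"
    and ha3: "a3 = (m1 + m2) *\<^sub>R y"
begin

lemma jac_form:
  "inertia_form m1 m2 m3 a1 a2 a3 u v =
    (u \<bullet> v) * (m1*m2*(m1+m2) * (z \<bullet> z) + m3*(m1+m2) * (y \<bullet> y))
    - (m1*m2*(m1+m2) * (u \<bullet> z) * (v \<bullet> z) + m3*(m1+m2) * (u \<bullet> y) * (v \<bullet> y))"
proof -
  have m3: "m3 = 1 - m1 - m2" using msum by simp
  show ?thesis
    unfolding inertia_form_def cross_dot_cross ha1 ha2 ha3
    by (simp add: inner_add_left inner_add_right inner_diff_left inner_diff_right inner_commute m3; algebra)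
qed

lemma jac_inertia:
  "inertia m1 m2 m3 a1 a2 a3 = m1*m2*(m1+m2) * (z \<bullet> z) + m3*(m1+m2) * (y \<bullet> y)"
proof -
  have m3: "m3 = 1 - m1 - m2" using msum by simp
  show ?thesis
    unfolding inertia_def power2_norm_eq_inner ha1 ha2 ha3
    by (simp add: inner_add_left inner_add_right inner_diff_left inner_diff_right inner_commute m3; algebra)
qed

lemma jac_norms:
  "m1 * (norm a1)^2 = m1 * (m3^2 * (y \<bullet> y) + 2*m2*m3 * (z \<bullet> y) + m2^2 * (z \<bullet> z))"
  "m2 * (norm a2)^2 = m2 * (m3^2 * (y \<bullet> y) - 2*m1*m3 * (z \<bullet> y) + m1^2 * (z \<bullet> z))"
  "m3 * (norm a3)^2 = m3 * (m1+m2)^2 * (y \<bullet> y)"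
  unfolding power2_norm_eq_inner ha1 ha2 ha3
  by (simp_all add: inner_add_left inner_add_right inner_diff_left inner_diff_right inner_commute power2_eq_square; algebra)+

lemma jac_area:
  "tri_area a1 a2 a3 = (m1+m2) * norm (cross3 z y) / 2"
proof -
  have m3: "m3 = 1 - m1 - m2" using msum by simp
  have e1: "a2 - a1 = (m1+m2) *\<^sub>R z" unfolding ha1 ha2 by (simp add: algebra_simps)
  have e2: "a3 - a1 = y + m2 *\<^sub>R z" unfolding ha1 ha3 m3 by (simp add: algebra_simps)
  have "cross3 (a2 - a1) (a3 - a1) = (m1+m2) *\<^sub>R cross3 z y"
    unfolding e1 e2 by (simp add: cross_mult_left cross_add_right cross_mult_right)
  then show ?thesis unfolding tri_area_def using pos1 pos2
    by simp
qed

lemma jac_charpoly: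
  assumes hI: "I = m1*m2*(m1+m2) * (z \<bullet> z) + m3*(m1+m2) * (y \<bullet> y)"
    and hs: "r1 + r2 = I"
    and hp: "r1 * r2 = (m1*m2*(m1+m2)) * (m3*(m1+m2)) * (cross3 z y \<bullet> cross3 z y)"
  shows "char_poly3 (inertia_matrix m1 m2 m3 a1 a2 a3) = [:-r1,1:] * [:-r2,1:] * [:-I,1:]"
proof -
  define al where "al = m1*m2*(m1+m2)"
  define be where "be = m3*(m1+m2)"
  have "poly (char_poly3 (inertia_matrix m1 m2 m3 a1 a2 a3)) t = poly ([:-r1,1:] * [:-r2,1:] * [:-I,1:]) t" for t
  proof -
    have M: "(\<chi> i j. (if i = j then t else 0) - inertia_matrix m1 m2 m3 a1 a2 a3 $ i $ j)
       = (\<chi> i j. (if i = j then t - I else 0) + al * (z$i) * (z$j) + be * (y$i) * (y$j))"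
      unfolding inertia_matrix_def
      by (simp add: vec_eq_iff jac_form inner_axis_axis inner_axis' ax hI al_def be_def algebra_simps)
    have "poly (char_poly3 (inertia_matrix m1 m2 m3 a1 a2 a3)) t
        = (t-I)^3 + (t-I)^2 * (al * (z \<bullet> z) + be * (y \<bullet> y)) + (t-I) * al * be * (cross3 z y \<bullet> cross3 z y)"
      unfolding poly_char M det_lemma ..
    also have "\<dots> = (t - r1) * (t - r2) * (t - I)"
      using hI hs hp unfolding al_def be_def by algebra
    finally have "poly (char_poly3 (inertia_matrix m1 m2 m3 a1 a2 a3)) t = (t - r1) * (t - r2) * (t - I)" .
    moreover have "poly ([:-r1,1:] * [:-r2,1:] * [:-I,1:]) t = (t - r1) * (t - r2) * (t - I)"
      by (simp only: poly_mult) simp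
    ultimately show ?thesis by simp
  qed
  then show ?thesis using poly_eq_poly_eq_iff by blast
qed

end

lemma sorted3:
  assumes "r1 \<le> r2" "r2 \<le> r3"
    and "char_poly3 A = [:-r1,1:] * [:-r2,1:] * [:-r3,1:]"
  shows "sorted_eigenvalues A = [r1, r2, r3]"
proof -
  have "proots (char_poly3 A) = {#r1, r2, r3#}"
  proof -
    have nz: "[:-r,1:] \<noteq> (0::real poly)" for r by simp
    have nz2: "[:-r1,1:] * [:-r2,1:] \<noteq> (0::real poly)" using nz by (metis mult_eq_0_iff)
    have "proots ([:-r1,1:] * [:-r2,1:] * [:-r3,1:]) = proots ([:-r1,1:] * [:-r2,1:]) + proots [:-r3,1:]"
      using proots_mult[OF nz2 nz] .
    also have "\<dots> = proots [:-r1,1:] + proots [:-r2,1:] + proots [:-r3,1:]"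
      using proots_mult[OF nz nz] by simp
    also have "\<dots> = {#r1, r2, r3#}" using proots_linear_factor[of "-r"] by simp
    finally show ?thesis unfolding assms(3) .
  qed
  then show ?thesis unfolding sorted_eigenvalues_def using assms(1,2) by simp
qed



lemma jac_exists:
  assumes "mass_ok m1 m2 m3" "m_triangle m1 m2 m3 b1 b2 b3"
  shows "\<exists>z y. b1 = -(m3 *\<^sub>R y) - m2 *\<^sub>R z \<and> b2 = -(m3 *\<^sub>R y) + m1 *\<^sub>R z \<and> b3 = (m1 + m2) *\<^sub>R y"
proof -
  have p: "m1 > 0" "m2 > 0" "m3 > 0" "m1 + m2 + m3 = 1" using assms(1) unfolding mass_ok_def by auto
  have c: "m1 * b1$i + m2 * b2$i + m3 * b3$i = 0" for i
  proof -
    have "(m1 *\<^sub>R b1 + m2 *\<^sub>R b2 + m3 *\<^sub>R b3) $ i = (0::real^3) $ i"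
      using assms(2) unfolding m_triangle_def by (simp only:)
    then show ?thesis by simp
  qed
  define s where "s = m1 + m2"
  have s: "s > 0" using p s_def by simp
  show ?thesis
  proof (intro exI conjI)
    show "b1 = -(m3 *\<^sub>R ((1/s) *\<^sub>R b3)) - m2 *\<^sub>R ((1/s) *\<^sub>R (b2 - b1))"
      unfolding vec_eq_iff
    proof
      fix i
      have k: "s * b1$i = -(m3*b3$i) - m2*(b2$i - b1$i)" using c[of i] unfolding s_def by (simp add: algebra_simps)
      show "b1$i = (-(m3 *\<^sub>R ((1/s) *\<^sub>R b3)) - m2 *\<^sub>R ((1/s) *\<^sub>R (b2 - b1)))$i"
      proof -
        have "b1$i = (s * b1$i) / s" using s by simp
        also have "\<dots> = (-(m3*b3$i) - m2*(b2$i - b1$i)) / s" using k by simp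
        finally show ?thesis by (simp add: diff_divide_distrib)
      qed
    qed
    show "b2 = -(m3 *\<^sub>R ((1/s) *\<^sub>R b3)) + m1 *\<^sub>R ((1/s) *\<^sub>R (b2 - b1))"
      unfolding vec_eq_iff
    proof
      fix i
      have k: "s * b2$i = -(m3*b3$i) + m1*(b2$i - b1$i)" using c[of i] unfolding s_def by (simp add: algebra_simps)
      show "b2$i = (-(m3 *\<^sub>R ((1/s) *\<^sub>R b3)) + m1 *\<^sub>R ((1/s) *\<^sub>R (b2 - b1)))$i"
      proof -
        have "b2$i = (s * b2$i) / s" using s by simp
        also have "\<dots> = (-(m3*b3$i) + m1*(b2$i - b1$i)) / s" using k by simp
        finally show ?thesis by (simp add: add_divide_distrib diff_divide_distrib)
      qed
    qed
    show "b3 = (m1 + m2) *\<^sub>R ((1/s) *\<^sub>R b3)"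
      using s by (simp add: s_def)
  qed
qed



lemma D_scalar:
  fixes ma mb mc Z Y W n :: real
  assumes hn: "n^2 = Z * Y - W^2"
  shows "(ma*mb*(ma+mb) * Z + mc*(ma+mb) * Y)^2 - 16 * (ma*mb*mc) * ((ma+mb) * n / 2)^2
    = (ma*mb*(ma+mb) * Z - mc*(ma+mb) * Y)^2 + 4 * (ma*mb*(ma+mb)) * (mc*(ma+mb)) * W^2"
proof -
  have "16 * (ma*mb*mc) * ((ma+mb) * n / 2)^2 = 4 * (ma*mb*mc) * (ma+mb)^2 * n^2"
    by (simp add: power_mult_distrib power_divide)
  also have "\<dots> = 4 * (ma*mb*mc) * (ma+mb)^2 * (Z * Y - W^2)" by (simp only: hn)
  finally have e: "16 * (ma*mb*mc) * ((ma+mb) * n / 2)^2 = 4 * (ma*mb*mc) * (ma+mb)^2 * (Z * Y - W^2)" .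
  show ?thesis unfolding e by (simp add: power2_eq_square algebra_simps)
qed

lemma eig_scalar:
  fixes I D al be C Z Y W :: real
  assumes al: "al > 0" and be: "be > 0" and Z: "Z \<ge> 0" and Y: "Y \<ge> 0" and Cn: "C \<ge> 0"
    and hI: "I = al * Z + be * Y"
    and hD: "D = (al * Z - be * Y)^2 + 4 * al * be * W^2"
    and hC: "C = Z * Y - W^2"
  shows "D \<ge> 0" "sqrt D \<le> I" "(I - sqrt D) / 2 \<le> (I + sqrt D) / 2"
    "(I - sqrt D) / 2 + (I + sqrt D) / 2 = I"
    "(I - sqrt D) / 2 * ((I + sqrt D) / 2) = al * be * C"
proof -
  have DI: "D = I^2 - 4 * al * be * C"
    unfolding hD hI hC by (simp add: power2_eq_square algebra_simps)
  show D0: "D \<ge> 0" unfolding hD using al be by (simp add: add_nonneg_nonneg)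
  have I0: "I \<ge> 0" unfolding hI using al be Z Y by (simp add: add_nonneg_nonneg)
  have "0 \<le> 4 * al * be * C" using al be Cn by simp
  then have "D \<le> I^2" unfolding DI by linarith
  then have "sqrt D \<le> sqrt (I^2)" by (rule real_sqrt_le_mono)
  then show "sqrt D \<le> I" using I0 by simp
  have "sqrt D \<ge> 0" using D0 by simp
  then show "(I - sqrt D) / 2 \<le> (I + sqrt D) / 2" by (simp add: field_simps)
  show "(I - sqrt D) / 2 + (I + sqrt D) / 2 = I" by (simp add: field_simps)
  have sq: "(sqrt D)^2 = D" using D0 by simp
  have "(I - sqrt D) / 2 * ((I + sqrt D) / 2) = (I^2 - (sqrt D)^2)/4" by (simp add: field_simps power2_eq_square)
  also have "\<dots> = al * be * C" unfolding sq unfolding DI by simp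
  finally show "(I - sqrt D) / 2 * ((I + sqrt D) / 2) = al * be * C" .
qed

context
  fixes m1 m2 m3 :: real and a1 a2 a3 z y :: "real^3"
  assumes msum: "m1 + m2 + m3 = 1" and pos1: "m1 > 0" and pos2: "m2 > 0" and pos3: "m3 > 0"
    and ha1: "a1 = -(m3 *\<^sub>R y) - m2 *\<^sub>R z"
    and ha2: "a2 = -(m3 *\<^sub>R y) + m1 *\<^sub>R z"
    and ha3: "a3 = (m1 + m2) *\<^sub>R y"
begin

lemma jac_D:
  "(inertia m1 m2 m3 a1 a2 a3)^2 - 16 * (m1*m2*m3) * (tri_area a1 a2 a3)^2
    = (m1*m2*(m1+m2) * (z \<bullet> z) - m3*(m1+m2) * (y \<bullet> y))^2 + 4 * (m1*m2*(m1+m2)) * (m3*(m1+m2)) * (z \<bullet> y)^2"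
proof -
  have C: "(norm (cross3 z y))^2 = (z \<bullet> z) * (y \<bullet> y) - (z \<bullet> y)^2"
    using norm_cross_dot[of z y] by (simp add: power_mult_distrib power2_norm_eq_inner)
  show ?thesis
    unfolding jac_inertia[OF msum pos1 pos2 pos3 ha1 ha2 ha3] jac_area[OF msum pos1 pos2 pos3 ha1 ha2 ha3]
    by (rule D_scalar[where ma=m1 and mb=m2 and mc=m3, OF C])
qed

lemma jac_cross: "cross3 z y \<bullet> cross3 z y = (z \<bullet> z) * (y \<bullet> y) - (z \<bullet> y)^2"
    using norm_cross_dot[of z y] by (simp add: power_mult_distrib power2_norm_eq_inner)

lemma jac_eig:
  defines "I \<equiv> inertia m1 m2 m3 a1 a2 a3"
  defines "D \<equiv> I^2 - 16 * (m1*m2*m3) * (tri_area a1 a2 a3)^2"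
  shows "sorted_eigenvalues (inertia_matrix m1 m2 m3 a1 a2 a3) = [(I - sqrt D)/2, (I + sqrt D)/2, I]"
proof -
  define al where "al = m1*m2*(m1+m2)"
  define be where "be = m3*(m1+m2)"
  have al: "al > 0" using pos1 pos2 by (simp add: al_def)
  have be: "be > 0" using pos1 pos2 pos3 by (simp add: be_def)
  have hI: "I = al * (z \<bullet> z) + be * (y \<bullet> y)"
    unfolding I_def al_def be_def by (rule jac_inertia[OF msum pos1 pos2 pos3 ha1 ha2 ha3])
  have hD: "D = (al * (z \<bullet> z) - be * (y \<bullet> y))^2 + 4 * al * be * (z \<bullet> y)^2"
    unfolding D_def I_def al_def be_def by (rule jac_D)
  have cr: "cross3 z y \<bullet> cross3 z y = (z \<bullet> z) * (y \<bullet> y) - (z \<bullet> y)^2" by (rule jac_cross)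
  have Cn: "cross3 z y \<bullet> cross3 z y \<ge> 0" by (rule inner_ge_zero)
  note es = eig_scalar[OF al be inner_ge_zero inner_ge_zero Cn hI hD cr]
  have cp: "char_poly3 (inertia_matrix m1 m2 m3 a1 a2 a3) = [:-((I - sqrt D)/2),1:] * [:-((I + sqrt D)/2),1:] * [:-I,1:]"
  proof (rule jac_charpoly[OF msum pos1 pos2 pos3 ha1 ha2 ha3])
    show "I = m1 * m2 * (m1 + m2) * (z \<bullet> z) + m3 * (m1 + m2) * (y \<bullet> y)" using hI unfolding al_def be_def .
    show "(I - sqrt D) / 2 + (I + sqrt D) / 2 = I" by (rule es(4))
    show "(I - sqrt D) / 2 * ((I + sqrt D) / 2) = m1 * m2 * (m1 + m2) * (m3 * (m1 + m2)) * (cross3 z y \<bullet> cross3 z y)"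
      using es(5) unfolding al_def be_def .
  qed
  show ?thesis
  proof (rule sorted3[OF _ _ cp])
    show "(I - sqrt D) / 2 \<le> (I + sqrt D) / 2" by (rule es(3))
    have "sqrt D \<le> I" by (rule es(2))
    then show "(I + sqrt D) / 2 \<le> I" by (simp add: field_simps)
  qed
qed

lemma jac_pole:
  defines "I \<equiv> inertia m1 m2 m3 a1 a2 a3"
  shows "(m1 * (norm a1)\<^sup>2 = (1 - m1) / 2 * I \<and> m2 * (norm a2)\<^sup>2 = (1 - m2) / 2 * I
            \<and> m3 * (norm a3)\<^sup>2 = (1 - m3) / 2 * I) \<longleftrightarrow>
         (m1*m2*(m1+m2) * (z \<bullet> z) - m3*(m1+m2) * (y \<bullet> y) = 0 \<and> z \<bullet> y = 0)"
proof -
  define E where "E = m1*m2*(m1+m2) * (z \<bullet> z) - m3*(m1+m2) * (y \<bullet> y)"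
  define s where "s = m1 + m2"
  have s: "s > 0" using pos1 pos2 s_def by simp
  have m3: "m3 = 1 - m1 - m2" using msum by simp
  have hI: "I = m1*m2*(m1+m2) * (z \<bullet> z) + m3*(m1+m2) * (y \<bullet> y)"
    unfolding I_def by (rule jac_inertia[OF msum pos1 pos2 pos3 ha1 ha2 ha3])
  note nr = jac_norms[OF msum pos1 pos2 pos3 ha1 ha2 ha3]
  have f3: "m3 * (norm a3)\<^sup>2 - (1 - m3) / 2 * I = -(s/2) * E"
    unfolding nr unfolding hI E_def s_def m3 by (simp add: field_simps; algebra)
  define c1 where "c1 = (m2 - m1*m3) / (2 * s)"
  define c2 where "c2 = (m1 - m2*m3) / (2 * s)"
  have f1: "m1 * (norm a1)\<^sup>2 - (1 - m1) / 2 * I = c1 * E + 2*m1*m2*m3 * (z \<bullet> y)"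
    using s unfolding c1_def unfolding nr unfolding hI E_def s_def m3 by (simp add: field_simps; algebra)
  have f2: "m2 * (norm a2)\<^sup>2 - (1 - m2) / 2 * I = c2 * E - 2*m1*m2*m3 * (z \<bullet> y)"
    using s unfolding c2_def unfolding nr unfolding hI E_def s_def m3 by (simp add: field_simps; algebra)
  have mm: "m1*m2*m3 \<noteq> 0" using pos1 pos2 pos3 by simp
  show ?thesis
    unfolding E_def[symmetric]
  proof
    assume h: "m1 * (norm a1)\<^sup>2 = (1 - m1) / 2 * I \<and> m2 * (norm a2)\<^sup>2 = (1 - m2) / 2 * I
            \<and> m3 * (norm a3)\<^sup>2 = (1 - m3) / 2 * I"
    have "-(s/2) * E = 0" using h f3 by linarith
    then have E0: "E = 0" using s by simp
    have "c1 * E + 2*m1*m2*m3 * (z \<bullet> y) = 0" using h f1 by linarith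
    then have "z \<bullet> y = 0" using E0 mm by simp
    with E0 show "E = 0 \<and> z \<bullet> y = 0" by simp
  next
    assume h: "E = 0 \<and> z \<bullet> y = 0"
    then show "m1 * (norm a1)\<^sup>2 = (1 - m1) / 2 * I \<and> m2 * (norm a2)\<^sup>2 = (1 - m2) / 2 * I
            \<and> m3 * (norm a3)\<^sup>2 = (1 - m3) / 2 * I"
      using f1 f2 f3 by simp
  qed
qed

lemma jac_mtri: "m_triangle m1 m2 m3 a1 a2 a3"
  unfolding m_triangle_def ha1 ha2 ha3 by (simp add: algebra_simps)

end


lemma area_real:
  fixes mm I De :: real
  assumes "mm > 0" "I \<ge> 0" "De \<ge> 0"
  shows "(I^2 - 16 * mm * De^2 = 0 \<longleftrightarrow> De = I / (4 * sqrt mm))"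
    and "I^2 - 16 * mm * De^2 \<ge> 0 \<Longrightarrow> De \<le> I / (4 * sqrt mm)"
proof -
  define q where "q = sqrt mm"
  have q: "q > 0" "q^2 = mm" using assms(1) q_def by auto
  have e: "16 * mm * De^2 = (4*q*De)^2" using q by (simp add: power_mult_distrib)
  have n: "4*q*De \<ge> 0" using q assms by simp
  show "(I^2 - 16 * mm * De^2 = 0 \<longleftrightarrow> De = I / (4 * sqrt mm))"
  proof -
    have "I^2 - 16 * mm * De^2 = 0 \<longleftrightarrow> I^2 = (4*q*De)^2" using e by simp
    also have "\<dots> \<longleftrightarrow> I = 4*q*De" using n assms(2) by (simp add: power2_eq_iff_nonneg)
    also have "\<dots> \<longleftrightarrow> De = I / (4 * sqrt mm)" using q unfolding q_def[symmetric] by (auto simp: field_simps)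
    finally show ?thesis .
  qed
  assume "I^2 - 16 * mm * De^2 \<ge> 0"
  then have "(4*q*De)^2 \<le> I^2" using e by simp
  then have "4*q*De \<le> I" using assms(2) power2_le_imp_le by blast
  then show "De \<le> I / (4 * sqrt mm)" using q unfolding q_def[symmetric] by (simp add: field_simps)
qed

theorem mainTheorem13:
  fixes m1 m2 m3 :: real and a1 a2 a3 :: "real^3"
  assumes masses: "mass_ok m1 m2 m3"
    and mtri: "m_triangle m1 m2 m3 a1 a2 a3"
    and nonzero: "(a1, a2, a3) \<noteq> (0, 0, 0)"
    and nondeg: "tri_area a1 a2 a3 > 0"
  defines "I \<equiv> inertia m1 m2 m3 a1 a2 a3"
  shows "((m1 * (norm a1)\<^sup>2 = (1 - m1) / 2 * I \<and> m2 * (norm a2)\<^sup>2 = (1 - m2) / 2 * I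
            \<and> m3 * (norm a3)\<^sup>2 = (1 - m3) / 2 * I)
          \<longleftrightarrow> lambda1 m1 m2 m3 a1 a2 a3 = lambda2 m1 m2 m3 a1 a2 a3)
       \<and> (lambda1 m1 m2 m3 a1 a2 a3 = lambda2 m1 m2 m3 a1 a2 a3
          \<longleftrightarrow> tri_area a1 a2 a3 = I / (4 * sqrt (m1 * m2 * m3)))
       \<and> (\<forall>b1 b2 b3. m_triangle m1 m2 m3 b1 b2 b3 \<and> inertia m1 m2 m3 b1 b2 b3 = I
             \<longrightarrow> tri_area b1 b2 b3 \<le> I / (4 * sqrt (m1 * m2 * m3)))
       \<and> (\<exists>b1 b2 b3. m_triangle m1 m2 m3 b1 b2 b3 \<and> inertia m1 m2 m3 b1 b2 b3 = I
             \<and> tri_area b1 b2 b3 = I / (4 * sqrt (m1 * m2 * m3)))"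
proof -
  have p: "m1 + m2 + m3 = 1" "m1 > 0" "m2 > 0" "m3 > 0" using masses unfolding mass_ok_def by auto
  define al where "al = m1*m2*(m1+m2)"
  define be where "be = m3*(m1+m2)"
  have al: "al > 0" using p by (simp add: al_def)
  have be: "be > 0" using p by (simp add: be_def)
  have mm: "m1*m2*m3 > 0" using p by simp
  have area0: "tri_area b1 b2 b3 \<ge> 0" for b1 b2 b3 unfolding tri_area_def by simp
  have gen: "inertia m1 m2 m3 b1 b2 b3 \<ge> 0 \<and>
     (inertia m1 m2 m3 b1 b2 b3)^2 - 16 * (m1*m2*m3) * (tri_area b1 b2 b3)^2 \<ge> 0"
    if hb0: "m_triangle m1 m2 m3 b1 b2 b3" for b1 b2 b3
  proof -
    obtain z y where h: "b1 = -(m3 *\<^sub>R y) - m2 *\<^sub>R z" "b2 = -(m3 *\<^sub>R y) + m1 *\<^sub>R z" "b3 = (m1 + m2) *\<^sub>R y"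
      using jac_exists[OF masses hb0] by blast
    have "inertia m1 m2 m3 b1 b2 b3 = al * (z \<bullet> z) + be * (y \<bullet> y)"
      unfolding al_def be_def by (rule jac_inertia[OF p h])
    moreover have "(inertia m1 m2 m3 b1 b2 b3)^2 - 16 * (m1*m2*m3) * (tri_area b1 b2 b3)^2
       = (al * (z \<bullet> z) - be * (y \<bullet> y))^2 + 4 * al * be * (z \<bullet> y)^2"
      unfolding al_def be_def by (rule jac_D[OF p h])
    ultimately show ?thesis using al be by (simp add: add_nonneg_nonneg)
  qed
  obtain z y where h: "a1 = -(m3 *\<^sub>R y) - m2 *\<^sub>R z" "a2 = -(m3 *\<^sub>R y) + m1 *\<^sub>R z" "a3 = (m1 + m2) *\<^sub>R y"
    using jac_exists[OF masses mtri] by blast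
  define D where "D = I^2 - 16 * (m1*m2*m3) * (tri_area a1 a2 a3)^2"
  have I0: "I \<ge> 0" using gen[OF mtri] unfolding I_def by simp
  have hD: "D = (al * (z \<bullet> z) - be * (y \<bullet> y))^2 + 4 * al * be * (z \<bullet> y)^2"
    unfolding D_def I_def al_def be_def by (rule jac_D[OF p h])
  have D0: "D \<ge> 0" using gen[OF mtri] unfolding D_def I_def by simp
  have eig: "sorted_eigenvalues (inertia_matrix m1 m2 m3 a1 a2 a3) = [(I - sqrt D)/2, (I + sqrt D)/2, I]"
    unfolding D_def I_def by (rule jac_eig[OF p h])
  have l1: "lambda1 m1 m2 m3 a1 a2 a3 = (I - sqrt D)/2" unfolding lambda1_def eig by simp
  have l2: "lambda2 m1 m2 m3 a1 a2 a3 = (I + sqrt D)/2" unfolding lambda2_def eig by simp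
  have lam: "lambda1 m1 m2 m3 a1 a2 a3 = lambda2 m1 m2 m3 a1 a2 a3 \<longleftrightarrow> D = 0"
    unfolding l1 l2 using D0 by auto
  have pole: "(m1 * (norm a1)\<^sup>2 = (1 - m1) / 2 * I \<and> m2 * (norm a2)\<^sup>2 = (1 - m2) / 2 * I
            \<and> m3 * (norm a3)\<^sup>2 = (1 - m3) / 2 * I) \<longleftrightarrow> D = 0"
  proof -
    have "(m1 * (norm a1)\<^sup>2 = (1 - m1) / 2 * I \<and> m2 * (norm a2)\<^sup>2 = (1 - m2) / 2 * I
            \<and> m3 * (norm a3)\<^sup>2 = (1 - m3) / 2 * I) \<longleftrightarrow>
         (al * (z \<bullet> z) - be * (y \<bullet> y) = 0 \<and> z \<bullet> y = 0)"
      unfolding I_def al_def be_def by (rule jac_pole[OF p h])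
    also have "\<dots> \<longleftrightarrow> D = 0"
    proof
      assume "al * (z \<bullet> z) - be * (y \<bullet> y) = 0 \<and> z \<bullet> y = 0"
      then show "D = 0" unfolding hD by simp
    next
      assume "D = 0"
      then have s: "(al * (z \<bullet> z) - be * (y \<bullet> y))^2 + (4 * al * be) * (z \<bullet> y)^2 = 0" unfolding hD by simp
      have n1: "(al * (z \<bullet> z) - be * (y \<bullet> y))^2 \<ge> 0" by simp
      have n2: "(4 * al * be) * (z \<bullet> y)^2 \<ge> 0" using al be by simp
      have "(al * (z \<bullet> z) - be * (y \<bullet> y))^2 = 0" using s n1 n2 by linarith
      moreover have "(4 * al * be) * (z \<bullet> y)^2 = 0" using s n1 n2 by linarith
      ultimately show "al * (z \<bullet> z) - be * (y \<bullet> y) = 0 \<and> z \<bullet> y = 0" using al be by simp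
    qed
    finally show ?thesis .
  qed
  have areq: "D = 0 \<longleftrightarrow> tri_area a1 a2 a3 = I / (4 * sqrt (m1 * m2 * m3))"
    unfolding D_def using area_real(1)[OF mm I0 area0] .
  have maxi: "\<forall>b1 b2 b3. m_triangle m1 m2 m3 b1 b2 b3 \<and> inertia m1 m2 m3 b1 b2 b3 = I
             \<longrightarrow> tri_area b1 b2 b3 \<le> I / (4 * sqrt (m1 * m2 * m3))"
  proof (intro allI impI)
    fix b1 b2 b3 assume hb: "m_triangle m1 m2 m3 b1 b2 b3 \<and> inertia m1 m2 m3 b1 b2 b3 = I"
    then show "tri_area b1 b2 b3 \<le> I / (4 * sqrt (m1 * m2 * m3))"
      using gen[of b1 b2 b3] area_real(2)[OF mm I0 area0] by simp
  qed
  have ex: "\<exists>b1 b2 b3. m_triangle m1 m2 m3 b1 b2 b3 \<and> inertia m1 m2 m3 b1 b2 b3 = I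
             \<and> tri_area b1 b2 b3 = I / (4 * sqrt (m1 * m2 * m3))"
  proof -
    define c where "c = sqrt (I / (2*al))"
    define d where "d = sqrt (I / (2*be))"
    define z' :: "real^3" where "z' = axis 1 c"
    define y' :: "real^3" where "y' = axis 2 d"
    define b1 where "b1 = -(m3 *\<^sub>R y') - m2 *\<^sub>R z'"
    define b2 where "b2 = -(m3 *\<^sub>R y') + m1 *\<^sub>R z'"
    define b3 where "b3 = (m1 + m2) *\<^sub>R y'"
    note hb = b1_def b2_def b3_def
    have zz: "al * (z' \<bullet> z') = I/2" unfolding z'_def c_def using al I0
      by (simp add: inner_axis_axis)
    have yy: "be * (y' \<bullet> y') = I/2" unfolding y'_def d_def using be I0
      by (simp add: inner_axis_axis)
    have zy: "z' \<bullet> y' = 0" unfolding z'_def y'_def by (simp add: inner_axis_axis)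
    have mt: "m_triangle m1 m2 m3 b1 b2 b3" by (rule jac_mtri[OF p hb])
    have iner: "inertia m1 m2 m3 b1 b2 b3 = I"
      using jac_inertia[OF p hb] zz yy unfolding al_def be_def by simp
    have "(inertia m1 m2 m3 b1 b2 b3)^2 - 16 * (m1*m2*m3) * (tri_area b1 b2 b3)^2 = 0"
      using jac_D[OF p hb] zz yy zy unfolding al_def be_def by simp
    then have "I^2 - 16 * (m1*m2*m3) * (tri_area b1 b2 b3)^2 = 0" using iner by simp
    then have "tri_area b1 b2 b3 = I / (4 * sqrt (m1 * m2 * m3))"
      using area_real(1)[OF mm I0 area0[of b1 b2 b3]] by blast
    with mt iner show ?thesis by blast
  qed
  show ?thesis unfolding pole lam areq[symmetric] using maxi ex by simp
qed


end
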